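(* Let $X$ be a spatially independent random subcomplex of $\triangle_n$. Then for every $Y\in S_n$ and all $Z_1\subset Z_2$ in $S_n$ with $\mathbb{P}(Z_2\subset X)>0$, \[ \mathbb{P}(Y\subset X\mid Z_1\subset X)\le\mathbb{P}(Y\subset X\mid Z_2\subset X). \]
   Context: $\triangle_n=2^{[n]}$; $S_n$ is the set of subcomplexes of $\triangle_n$ (families of subsets of $[n]$ closed under taking subsets); a random subcomplex is an $S_n$-valued random variable. $X$ is spatially independent if $\mathbb{P}(Y_1\cup Y_2\subset X)\,\mathbb{P}(Y_1\cap Y_2\subset X)=\mathbb{P}(Y_1\subset X)\,\mathbb{P}(Y_2\subset X)$ for all $Y_1,Y_2\in S_n$. *)

theory Defs
  imports "HOL-Probability.Probability"
begin

definition full_simplex :: "nat \<Rightarrow> nat set set" where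
  "full_simplex n = Pow {1..n}"

definition subcomplexes :: "nat \<Rightarrow> nat set set set" where
  "subcomplexes n = {K. K \<subseteq> full_simplex n \<and> (\<forall>A\<in>K. \<forall>B. B \<subseteq> A \<longrightarrow> B \<in> K)}"

definition random_subcomplex :: "nat \<Rightarrow> nat set set pmf \<Rightarrow> bool" where
  "random_subcomplex n X \<longleftrightarrow> set_pmf X \<subseteq> subcomplexes n"

definition contain_prob :: "nat set set pmf \<Rightarrow> nat set set \<Rightarrow> real" where
  "contain_prob X Y = measure_pmf.prob X {K. Y \<subseteq> K}"

definition cond_contain_prob :: "nat set set pmf \<Rightarrow> nat set set \<Rightarrow> nat set set \<Rightarrow> real" where
  "cond_contain_prob X Y Z =
     measure_pmf.prob X {K. Y \<subseteq> K \<and> Z \<subseteq> K} / measure_pmf.prob X {K. Z \<subseteq> K}"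

definition spatially_independent :: "nat \<Rightarrow> nat set set pmf \<Rightarrow> bool" where
  "spatially_independent n X \<longleftrightarrow>
     (\<forall>Y1\<in>subcomplexes n. \<forall>Y2\<in>subcomplexes n.
        contain_prob X (Y1 \<union> Y2) * contain_prob X (Y1 \<inter> Y2)
          = contain_prob X Y1 * contain_prob X Y2)"

end

theory Submission
  imports Defs
begin

lemma sub_un: "A \<in> subcomplexes n \<Longrightarrow> B \<in> subcomplexes n \<Longrightarrow> A \<union> B \<in> subcomplexes n"
  unfolding subcomplexes_def by auto

lemma cp_mono: "A \<subseteq> B \<Longrightarrow> contain_prob X B \<le> contain_prob X A"
  unfolding contain_prob_def
  by (rule measure_pmf.finite_measure_mono) auto

lemma ccp_eq: "cond_contain_prob X Y Z = contain_prob X (Y \<union> Z) / contain_prob X Z"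
proof -
  have "{K. Y \<subseteq> K \<and> Z \<subseteq> K} = {K. Y \<union> Z \<subseteq> K}" by blast
  then show ?thesis unfolding cond_contain_prob_def contain_prob_def by (simp only:)
qed

theorem mainTheorem7:
  fixes n :: nat and X :: "nat set set pmf" and Y Z1 Z2 :: "nat set set"
  assumes "random_subcomplex n X"
    and "spatially_independent n X"
    and "Y \<in> subcomplexes n" and "Z1 \<in> subcomplexes n" and "Z2 \<in> subcomplexes n"
    and "Z1 \<subseteq> Z2"
    and "contain_prob X Z2 > 0"
  shows "cond_contain_prob X Y Z1 \<le> cond_contain_prob X Y Z2"
proof -
  let ?p = "contain_prob X"
  have A: "Y \<union> Z1 \<in> subcomplexes n" by (rule sub_un[OF assms(3) assms(4)])
  note si0 = assms(2)[unfolded spatially_independent_def]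
  note si = bspec[OF bspec[OF si0 A] assms(5)]
  have e: "(Y \<union> Z1) \<union> Z2 = Y \<union> Z2" using assms(6) by blast
  have m: "?p ((Y \<union> Z1) \<inter> Z2) \<le> ?p Z1" by (rule cp_mono) (use assms(6) in blast)
  have nn: "?p (Y \<union> Z2) \<ge> 0" unfolding contain_prob_def by simp
  have z1: "?p Z1 > 0" using cp_mono[OF assms(6), of X] assms(7) by linarith
  have key: "?p (Y \<union> Z1) * ?p Z2 \<le> ?p (Y \<union> Z2) * ?p Z1"
  proof -
    have "?p (Y \<union> Z2) * ?p ((Y \<union> Z1) \<inter> Z2) \<le> ?p (Y \<union> Z2) * ?p Z1"
      by (rule mult_left_mono[OF m nn])
    then show ?thesis using si unfolding e by (simp only: mult.commute)
  qed
  define a where "a = ?p (Y \<union> Z1)"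
  define b where "b = ?p Z1"
  define c where "c = ?p (Y \<union> Z2)"
  define d where "d = ?p Z2"
  have k: "a * d \<le> c * b" using key unfolding a_def b_def c_def d_def .
  have bd: "b > 0" "d > 0" using z1 assms(7) unfolding b_def d_def by auto
  have "a / b = (a * d) / (b * d)" using bd by simp
  also have "\<dots> \<le> (c * b) / (b * d)" by (rule divide_right_mono[OF k]) (use bd in simp)
  also have "\<dots> = c / d" using bd by simp
  finally have "a / b \<le> c / d" .
  then show ?thesis unfolding ccp_eq a_def b_def c_def d_def .
qed

end
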